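(* Let $d, s, t, \ell$ be integers with $s\ge 1$, $\ell\ge 0$, $d \geq 3t-5$ and $t \geq \max\{5, \ell+4\}$. Then: (1) if ($s = 2$ and $t \geq 6$) or ($s \geq 3$ and $t \geq 7$), every edge-coloring of $W_d(s)$ using at least $\left\lfloor \frac{(s+1)t-(3s+4)}{t-3} d \right\rfloor + 1$ colors contains a rainbow $F_t$, i.e., \[ \mathrm{rb}(W_d(s), F_t) \le \left\lfloor \frac{(s+1)t-(3s+4)}{t-3}\, d \right\rfloor + 1; \] (2) for every $\theta_{t,\ell}\in\Theta_{t,\ell}$, every edge-coloring of $W_d$ using at least $\left\lfloor \frac{2t-7}{t-3} d \right\rfloor + 1$ colors contains a rainbow $\theta_{t,\ell}$, i.e., \[ \mathrm{rb}(W_d, \theta_{t,\ell}) \le \left\lfloor \frac{2t-7}{t-3}\, d \right\rfloor + 1 . \]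
   Context: A subgraph of an edge-colored graph is rainbow if no two of its edges have the same color. For graphs $G$ and $H$, the rainbow number $\mathrm{rb}(G,H)$ is the minimum integer $k$ such that every edge-coloring of $G$ that uses at least $k$ distinct colors contains a rainbow subgraph isomorphic to $H$. For $d \ge 3$ and $s \ge 1$, $W_d(s) = \overline{K_s} + C_d$: hub vertices $u_1,\dots,u_s$, pairwise non-adjacent, each adjacent to every vertex of a cycle $v_1v_2\cdots v_dv_1$; $W_d := W_d(1)$. The fan $F_t$ is obtained from a cycle $v_1v_2\cdots v_tv_1$ by adding all chords $v_1v_i$, $3 \le i \le t-1$. For $0 \le \ell \le t-3$, $\Theta_{t,\ell}$ is the class of graphs obtained from a cycle $v_1v_2\cdots v_tv_1$ by adding exactly $\ell$ chords, each from $\{v_1v_i : 3 \le i \le t-1\}$. *)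

theory Defs
  imports Complex_Main
begin

text \<open>Simple graphs are represented by their edge sets: an edge is a two-element
  set of vertices.\<close>

definition gwheel_edges :: "nat \<Rightarrow> nat \<Rightarrow> (nat + nat) set set" where
  "gwheel_edges d s =
     {{Inl i, Inr j} | i j. i < s \<and> j < d} \<union>
     {{Inr j, Inr ((j + 1) mod d)} | j. j < d}"

text \<open>Cycle v_1 ... v_t v_1 on vertices 0..t-1 (vertex v_i is i-1).\<close>
definition cycle_edges :: "nat \<Rightarrow> nat set set" where
  "cycle_edges t = {{i, (i + 1) mod t} | i. i < t}"

text \<open>Possible chords v_1 v_i, 3 \<le> i \<le> t-1, i.e. {0, i-1}.\<close>
definition fan_chords :: "nat \<Rightarrow> nat set set" where
  "fan_chords t = {{0, i} | i. 2 \<le> i \<and> i \<le> t - 2}"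

definition fan_edges :: "nat \<Rightarrow> nat set set" where
  "fan_edges t = cycle_edges t \<union> fan_chords t"

definition Theta_class :: "nat \<Rightarrow> nat \<Rightarrow> nat set set set" where
  "Theta_class t l = {cycle_edges t \<union> C | C. C \<subseteq> fan_chords t \<and> card C = l}"

definition has_rainbow_copy ::
  "'a set set \<Rightarrow> ('a set \<Rightarrow> 'c) \<Rightarrow> 'b set \<Rightarrow> 'b set set \<Rightarrow> bool" where
  "has_rainbow_copy E c VH EH \<longleftrightarrow>
     (\<exists>f. inj_on f VH \<and> (\<forall>e\<in>EH. f ` e \<in> E) \<and> inj_on (\<lambda>e. c (f ` e)) EH)"

end

theory Submission
  imports Defs
begin


lemma fiber_sum:
  assumes "finite E"
  shows "card E = (\<Sum>v\<in>c ` E. card {e\<in>E. c e = v})"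
proof -
  have "E = (\<Union>v\<in>c ` E. {e\<in>E. c e = v})" by auto
  then have "card E = card (\<Union>v\<in>c ` E. {e\<in>E. c e = v})" by simp
  also have "\<dots> = (\<Sum>v\<in>c ` E. card {e\<in>E. c e = v})"
    by (rule card_UN_disjoint) (use assms in auto)
  finally show ?thesis .
qed

lemma double_count:
  assumes "finite I" "finite C"
  shows "(\<Sum>i\<in>I. card (win i \<inter> C)) = (\<Sum>e\<in>C. card {i\<in>I. e \<in> win i})"
proof -
  have "(\<Sum>i\<in>I. card (win i \<inter> C)) = (\<Sum>i\<in>I. card {e\<in>C. e \<in> win i})"
    by (intro sum.cong) (auto intro: arg_cong[where f=card])
  also have "\<dots> = (\<Sum>e\<in>C. card {i\<in>I. e \<in> win i})"
    by (rule sum_multicount_gen) (use assms in auto)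
  finally show ?thesis .
qed

lemma abstract_count:
  fixes I :: "'i set" and win :: "'i \<Rightarrow> 'e set" and E :: "'e set" and c :: "'e \<Rightarrow> 'c"
  assumes fI: "finite I" and fE: "finite E"
    and sub: "\<forall>i\<in>I. win i \<subseteq> E"
    and nr: "\<forall>i\<in>I. \<not> inj_on c (win i)"
    and mu: "\<forall>e\<in>E. card {i\<in>I. e \<in> win i} \<le> mu"
    and la: "\<forall>e\<in>E. \<forall>e'\<in>E. e \<noteq> e' \<longrightarrow> card {i\<in>I. e \<in> win i \<and> e' \<in> win i} \<le> lam"
    and ineq: "\<forall>m\<ge>3. mu * m \<le> 2 * lam * (m - 1) + 1"
  shows "card I \<le> lam * (card E - card (c ` E))"
proof -
  define C where "C v = {e\<in>E. c e = v}" for v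
  define K where "K v = {i\<in>I. 2 \<le> card (win i \<inter> C v)}" for v
  have IK: "I \<subseteq> (\<Union>v\<in>c ` E. K v)"
  proof
    fix i assume i: "i \<in> I"
    then obtain x y where xy: "x \<in> win i" "y \<in> win i" "x \<noteq> y" "c x = c y"
      using nr unfolding inj_on_def by blast
    then have "x \<in> E" "y \<in> E" using sub i by auto
    have "{x, y} \<subseteq> win i \<inter> C (c x)" using xy \<open>x \<in> E\<close> \<open>y \<in> E\<close> by (auto simp: C_def)
    moreover have "finite (win i \<inter> C (c x))" using fE by (auto simp: C_def)
    ultimately have "card {x,y} \<le> card (win i \<inter> C (c x))" by (rule card_mono[rotated])
    then have "2 \<le> card (win i \<inter> C (c x))" using xy by simp
    then show "i \<in> (\<Union>v\<in>c ` E. K v)" using i \<open>x \<in> E\<close> by (auto simp: K_def)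
  qed
  have Kb: "card (K v) \<le> lam * (card (C v) - 1)" for v
  proof -
    have fC: "finite (C v)" using fE by (auto simp: C_def)
    have CE: "C v \<subseteq> E" by (auto simp: C_def)
    consider "card (C v) \<le> 1" | "card (C v) = 2" | "card (C v) \<ge> 3" by linarith
    then show ?thesis
    proof cases
      case 1
      have "K v = {}"
      proof (rule ccontr)
        assume "K v \<noteq> {}"
        then obtain i where "i \<in> K v" by auto
        then have "2 \<le> card (win i \<inter> C v)" by (auto simp: K_def)
        moreover have "card (win i \<inter> C v) \<le> card (C v)" by (rule card_mono[OF fC]) auto
        ultimately show False using 1 by simp
      qed
      then show ?thesis by simp
    next
      case 2
      then obtain x y where xy: "C v = {x, y}" "x \<noteq> y" by (auto simp: card_Suc_eq numeral_2_eq_2)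
      have "K v \<subseteq> {i\<in>I. x \<in> win i \<and> y \<in> win i}"
      proof
        fix i assume i: "i \<in> K v"
        then have c2: "2 \<le> card (win i \<inter> {x, y})" using xy by (auto simp: K_def)
        have "win i \<inter> {x, y} = {x, y}"
        proof (rule card_subset_eq)
          show "card (win i \<inter> {x, y}) = card {x, y}" using c2 xy
            using card_mono[of "{x,y}" "win i \<inter> {x, y}"] by auto
        qed auto
        then show "i \<in> {i\<in>I. x \<in> win i \<and> y \<in> win i}" using i by (auto simp: K_def)
      qed
      then have "card (K v) \<le> card {i\<in>I. x \<in> win i \<and> y \<in> win i}"
        by (rule card_mono[rotated]) (use fI in auto)
      also have "\<dots> \<le> lam" using la xy CE by auto
      finally show ?thesis using 2 by simp
    next
      case 3
      have "2 * card (K v) = (\<Sum>i\<in>K v. 2)" by simp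
      also have "\<dots> \<le> (\<Sum>i\<in>K v. card (win i \<inter> C v))"
        by (rule sum_mono) (auto simp: K_def)
      also have "\<dots> \<le> (\<Sum>i\<in>I. card (win i \<inter> C v))"
        by (rule sum_mono2[OF fI]) (auto simp: K_def)
      also have "\<dots> = (\<Sum>e\<in>C v. card {i\<in>I. e \<in> win i})"
        by (rule double_count[OF fI fC])
      also have "\<dots> \<le> (\<Sum>e\<in>C v. mu)"
        by (rule sum_mono) (use mu CE in auto)
      also have "\<dots> = mu * card (C v)" by simp
      also have "\<dots> \<le> 2 * lam * (card (C v) - 1) + 1" using ineq 3 by auto
      finally show ?thesis by linarith
    qed
  qed
  have "card I \<le> card (\<Union>v\<in>c ` E. K v)"
    by (rule card_mono[OF _ IK]) (rule finite_subset[OF _ fI], auto simp: K_def)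
  also have "\<dots> \<le> (\<Sum>v\<in>c ` E. card (K v))" by (rule card_UN_le) (use fE in auto)
  also have "\<dots> \<le> (\<Sum>v\<in>c ` E. lam * (card (C v) - 1))" by (rule sum_mono) (rule Kb)
  also have "\<dots> = lam * (\<Sum>v\<in>c ` E. (card (C v) - 1))" by (simp add: sum_distrib_left)
  also have "(\<Sum>v\<in>c ` E. (card (C v) - 1)) = (\<Sum>v\<in>c ` E. card (C v)) - (\<Sum>v\<in>c ` E. 1)"
  proof (rule sum_subtractf_nat)
    fix v assume "v \<in> c ` E"
    then have "C v \<noteq> {}" by (auto simp: C_def)
    then show "1 \<le> card (C v)" using fE by (auto simp: C_def card_gt_0_iff Suc_le_eq)
  qed
  also have "(\<Sum>v\<in>c ` E. card (C v)) = card E" using fiber_sum[OF fE, of c] by (simp add: C_def)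
  finally show ?thesis by simp
qed



definition fmap :: "nat \<Rightarrow> nat \<Rightarrow> nat \<Rightarrow> nat \<Rightarrow> nat + nat" where
  "fmap d h p i = (if i = 0 then Inl h else Inr ((p + i - 1) mod d))"

definition Jset :: "nat \<Rightarrow> nat set set \<Rightarrow> nat set" where
  "Jset t Ch = {j. j \<le> t - 2 \<and> (j = 0 \<or> j = t - 2 \<or> {0, j + 1} \<in> Ch)}"

definition win :: "nat \<Rightarrow> nat \<Rightarrow> nat set set \<Rightarrow> nat \<Rightarrow> nat \<Rightarrow> (nat + nat) set set" where
  "win d t Ch h p = (\<lambda>e. fmap d h p ` e) ` (cycle_edges t \<union> Ch)"

lemma modL:
  fixes d y j' j'' k :: nat
  assumes "k \<le> d" "j' + k < d" "j'' < d" "(y + j') mod d = ((y + d - k) mod d + j'') mod d"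
  shows "j' + k = j''"
proof -
  have "(y + j') mod d = (y + d - k + j'') mod d" using assms(4) by (simp add: mod_add_left_eq)
  then have "(y + j' + k) mod d = (y + d - k + j'' + k) mod d" by (metis mod_add_left_eq)
  also have "y + d - k + j'' + k = (y + j'') + d" using assms(1) by simp
  finally have "(y + j' + k) mod d = (y + j'') mod d" by simp
  show ?thesis
  proof (cases "y + j'' \<le> y + j' + k")
    case True
    then obtain r where r: "y + j' + k = y + j'' + d * r"
      using mod_eq_nat1E[OF \<open>(y + j' + k) mod d = (y + j'') mod d\<close>] by blast
    then have "j' + k = j'' + d * r" by simp
    then show ?thesis using assms(2) by (cases r) auto
  next
    case False
    then obtain r where r: "y + j'' = y + j' + k + d * r"
      using mod_eq_nat2E[OF \<open>(y + j' + k) mod d = (y + j'') mod d\<close>] by fastforce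
    then have "j'' = j' + k + d * r" by simp
    then show ?thesis using assms(3) by (cases r) auto
  qed
qed

lemma inv_mod:
  fixes d p j y :: nat
  assumes "p < d" "j < d" "(p + j) mod d = y"
  shows "p = (y + d - j) mod d"
proof -
  have "(y + d - j) mod d = ((p + j) mod d + d - j) mod d" using assms by simp
  also have "\<dots> = (p + j + d - j) mod d"
    by (metis add_diff_assoc assms(2) less_imp_le_nat mod_add_left_eq)
  also have "\<dots> = p" using assms by simp
  finally show ?thesis by simp
qed

lemma rim_uniq:
  fixes a b d :: nat
  assumes "3 \<le> d" "a < d" "b < d"
    "{Inr a, Inr ((a + 1) mod d)} = ({Inr b, Inr ((b + 1) mod d)} :: (nat + nat) set)"
  shows "a = b"
proof (rule ccontr)
  assume ne: "a \<noteq> b"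
  then have 1: "a = (b + 1) mod d" and 2: "b = (a + 1) mod d" using assms(4) by (auto simp: doubleton_eq_iff)
  have "a = (a + 2) mod d" using 1 2 by (simp add: mod_Suc_eq)
  then show False using assms(1,2)
  proof (cases "a + 2 < d")
    case False
    then have "(a + 2) mod d = (a + 2 - d) mod d" by (simp add: le_mod_geq)
    also have "\<dots> = a + 2 - d" using assms(1,2) by (intro mod_less) linarith
    finally show False using \<open>a = (a + 2) mod d\<close> False assms(1) by simp
  qed simp
qed



lemma win_cases:
  assumes t3: "3 \<le> t" and Ch: "Ch \<subseteq> fan_chords t" and x: "x \<in> win d t Ch h p"
  shows "(\<exists>j\<le>t-3. x = {Inr ((p+j) mod d), Inr (((p+j) mod d + 1) mod d)}) \<or>
         (\<exists>j\<in>Jset t Ch. x = {Inl h, Inr ((p+j) mod d)})"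
proof -
  obtain e where e: "e \<in> cycle_edges t \<union> Ch" and xe: "x = fmap d h p ` e"
    using x unfolding win_def by auto
  show ?thesis
  proof (cases "e \<in> Ch")
    case True
    then obtain i where i: "e = {0, i}" "2 \<le> i" "i \<le> t - 2" using Ch unfolding fan_chords_def by auto
    have "i - 1 \<in> Jset t Ch" using i True unfolding Jset_def by auto
    moreover have "x = {Inl h, Inr ((p + (i - 1)) mod d)}" using i xe by (simp add: fmap_def insert_commute)
    ultimately show ?thesis by blast
  next
    case False
    then obtain i where i: "e = {i, (i + 1) mod t}" "i < t" using e unfolding cycle_edges_def by auto
    consider "i = 0" | "i = t - 1" | "1 \<le> i" "i \<le> t - 2" using i t3 by linarith
    then show ?thesis
    proof cases
      case 1
      then have "e = {0, 1}" using i t3 by auto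
      then have "x = {Inl h, Inr ((p + 0) mod d)}" using xe by (simp add: fmap_def insert_commute)
      moreover have "0 \<in> Jset t Ch" by (simp add: Jset_def)
      ultimately show ?thesis by blast
    next
      case 2
      then have "e = {t - 1, 0}" using i t3 by auto
      have f1: "fmap d h p (t - 1) = Inr ((p + (t - 2)) mod d)" using t3
      proof -
        have "p + (t - 1) - 1 = p + (t - 2)" using t3 by simp
        then show ?thesis using t3 unfolding fmap_def by (simp only:) simp
      qed
      have f0: "fmap d h p 0 = Inl h" by (simp add: fmap_def)
      have "x = {Inl h, Inr ((p + (t - 2)) mod d)}" using xe f0 f1 \<open>e = {t - 1, 0}\<close>
        by auto
      moreover have "t - 2 \<in> Jset t Ch" by (simp add: Jset_def)
      ultimately show ?thesis by blast
    next
      case 3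
      then have "e = {i, i + 1}" using i t3 by auto
      have "fmap d h p i = Inr ((p + (i - 1)) mod d)" "fmap d h p (i + 1) = Inr ((p + i) mod d)"
        using 3 by (simp_all add: fmap_def)
      then have "x = {Inr ((p + (i - 1)) mod d), Inr ((p + i) mod d)}" using xe \<open>e = {i, i + 1}\<close>
        by simp
      also have "(p + i) mod d = ((p + (i - 1)) mod d + 1) mod d"
        using 3 by (simp add: mod_Suc_eq)
      finally have "x = {Inr ((p + (i - 1)) mod d), Inr (((p + (i - 1)) mod d + 1) mod d)}" .
      moreover have "i - 1 \<le> t - 3" using 3 by linarith
      ultimately show ?thesis by blast
    qed
  qed
qed


lemma win_sub:
  assumes "3 \<le> t" "Ch \<subseteq> fan_chords t" "h < s" "0 < d"
  shows "win d t Ch h p \<subseteq> gwheel_edges d s"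
proof
  fix x assume "x \<in> win d t Ch h p"
  from win_cases[OF assms(1,2) this] show "x \<in> gwheel_edges d s"
  proof
    assume "\<exists>j\<le>t-3. x = {Inr ((p+j) mod d), Inr (((p+j) mod d + 1) mod d)}"
    then obtain j where "x = {Inr ((p+j) mod d), Inr (((p+j) mod d + 1) mod d)}" by blast
    moreover have "(p+j) mod d < d" using assms(4) by simp
    ultimately show ?thesis unfolding gwheel_edges_def by blast
  next
    assume "\<exists>j\<in>Jset t Ch. x = {Inl h, Inr ((p+j) mod d)}"
    then obtain j where "x = {Inl h, Inr ((p+j) mod d)}" by blast
    moreover have "(p+j) mod d < d" using assms(4) by simp
    ultimately show ?thesis unfolding gwheel_edges_def using assms(3) by blast
  qed
qed

lemma fmap_inj:
  assumes "t \<le> d + 1"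
  shows "inj_on (fmap d h p) {0..<t}"
proof
  fix i i' assume i: "i \<in> {0..<t}" and i': "i' \<in> {0..<t}" and eq: "fmap d h p i = fmap d h p i'"
  show "i = i'"
  proof (cases "i = 0 \<or> i' = 0")
    case True
    then show ?thesis using eq by (auto simp: fmap_def split: if_splits)
  next
    case False
    then have m: "(p + (i - 1)) mod d = (p + (i' - 1)) mod d" using eq by (auto simp: fmap_def)
    have lt: "i - 1 < d" "i' - 1 < d" using i i' assms False by auto
    have "i - 1 = i' - 1"
    proof (cases "i - 1 \<le> i' - 1")
      case True
      then obtain r where "p + (i' - 1) = p + (i - 1) + d * r"
        using mod_eq_nat2E[OF m] by fastforce
      then show ?thesis using lt by (cases r) auto
    next
      case False
      then obtain r where "p + (i - 1) = p + (i' - 1) + d * r"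
        using mod_eq_nat1E[OF m] by fastforce
      then show ?thesis using lt by (cases r) auto
    qed
    then show ?thesis using False by linarith
  qed
qed

lemma edges_sub:
  assumes "Ch \<subseteq> fan_chords t" "e \<in> cycle_edges t \<union> Ch" "0 < t"
  shows "e \<subseteq> {0..<t}"
  using assms by (auto simp: cycle_edges_def fan_chords_def)

lemma rainbow_of_win:
  assumes "3 \<le> t" "Ch \<subseteq> fan_chords t" "h < s" "0 < d" "t \<le> d + 1"
    and inj: "inj_on c (win d t Ch h p)"
  shows "has_rainbow_copy (gwheel_edges d s) c {0..<t} (cycle_edges t \<union> Ch)"
  unfolding has_rainbow_copy_def
proof (intro exI conjI ballI)
  show "inj_on (fmap d h p) {0..<t}" by (rule fmap_inj) (use assms in auto)
  show "fmap d h p ` e \<in> gwheel_edges d s" if "e \<in> cycle_edges t \<union> Ch" for e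
    using win_sub[OF assms(1-4), of p] that unfolding win_def by blast
  have ii: "inj_on ((`) (fmap d h p)) (cycle_edges t \<union> Ch)"
  proof
    fix a b assume a: "a \<in> cycle_edges t \<union> Ch" and b: "b \<in> cycle_edges t \<union> Ch"
      and eq: "fmap d h p ` a = fmap d h p ` b"
    show "a = b"
      using inj_on_image_eq_iff[OF \<open>inj_on (fmap d h p) {0..<t}\<close> edges_sub[OF assms(2) a] edges_sub[OF assms(2) b]]
        eq assms(1) by simp
  qed
  have "inj_on (c \<circ> (`) (fmap d h p)) (cycle_edges t \<union> Ch)"
    by (rule comp_inj_on[OF ii]) (use inj in \<open>simp add: win_def\<close>)
  then show "inj_on (\<lambda>e. c (fmap d h p ` e)) (cycle_edges t \<union> Ch)" by (simp add: o_def)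
qed



lemma E_cases:
  assumes "e \<in> gwheel_edges d s"
  shows "(\<exists>h0<s. \<exists>y<d. e = {Inl h0, Inr y}) \<or> (\<exists>a<d. e = {Inr a, Inr ((a+1) mod d)})"
  using assms unfolding gwheel_edges_def by blast

lemma Jset_le: "j \<in> Jset t Ch \<Longrightarrow> j \<le> t - 2"
  by (simp add: Jset_def)

lemma Jset_fin: "finite (Jset t Ch)"
  by (rule finite_subset[of _ "{..t-2}"]) (auto simp: Jset_def)

lemma mem_spoke:
  assumes t3: "3 \<le> t" and Ch: "Ch \<subseteq> fan_chords t" and td: "t \<le> d"
    and x: "{Inl h0, Inr y} \<in> win d t Ch h p" and p: "p < d"
  shows "h = h0 \<and> (\<exists>j\<in>Jset t Ch. p = (y + d - j) mod d \<and> y = (p + j) mod d)"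
proof -
  from win_cases[OF t3 Ch x] obtain j where j: "j \<in> Jset t Ch"
    and eq: "{Inl h0, Inr y} = {Inl h, Inr ((p + j) mod d)}"
    by (auto simp: doubleton_eq_iff)
  then have "h = h0" "y = (p + j) mod d" by (auto simp: doubleton_eq_iff)
  moreover have "j < d" using Jset_le[OF j] td t3 by linarith
  ultimately show ?thesis using inv_mod[OF p, of j y] j by auto
qed

lemma mem_rim:
  assumes t3: "3 \<le> t" and Ch: "Ch \<subseteq> fan_chords t" and td: "t \<le> d"
    and x: "{Inr a, Inr ((a+1) mod d)} \<in> win d t Ch h p" and p: "p < d" and a: "a < d"
  shows "\<exists>j\<le>t-3. p = (a + d - j) mod d \<and> a = (p + j) mod d"
proof -
  from win_cases[OF t3 Ch x] obtain j where j: "j \<le> t - 3"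
    and eq: "{Inr a, Inr ((a+1) mod d)} = ({Inr ((p + j) mod d), Inr (((p + j) mod d + 1) mod d)} :: (nat + nat) set)"
    by (auto simp: doubleton_eq_iff)
  have "a = (p + j) mod d"
    by (rule rim_uniq[OF _ a _ eq]) (use t3 td in auto)
  moreover have "j < d" using j td t3 by linarith
  ultimately show ?thesis using inv_mod[OF p, of j a] j by auto
qed



lemma count_spoke:
  assumes t3: "3 \<le> t" and Ch: "Ch \<subseteq> fan_chords t" and td: "t \<le> d" and y: "y < d"
  shows "card {i\<in>{..<s} \<times> {..<d}. {Inl h0, Inr y} \<in> (case i of (h, p) \<Rightarrow> win d t Ch h p)}
          \<le> card (Jset t Ch)"
proof -
  let ?g = "\<lambda>j. (y + d - j) mod d"
  have "{i\<in>{..<s} \<times> {..<d}. {Inl h0, Inr y} \<in> (case i of (h, p) \<Rightarrow> win d t Ch h p)}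
        \<subseteq> {h0} \<times> (?g ` Jset t Ch)"
    using mem_spoke[OF t3 Ch td] by fastforce
  then have "card {i\<in>{..<s} \<times> {..<d}. {Inl h0, Inr y} \<in> (case i of (h, p) \<Rightarrow> win d t Ch h p)}
        \<le> card ({h0} \<times> (?g ` Jset t Ch))"
    by (rule card_mono[rotated]) (simp add: Jset_fin)
  also have "\<dots> \<le> card (Jset t Ch)"
    by (simp add: card_cartesian_product card_image_le Jset_fin)
  finally show ?thesis .
qed

lemma count_rim:
  assumes t3: "3 \<le> t" and Ch: "Ch \<subseteq> fan_chords t" and td: "t \<le> d" and a: "a < d"
  shows "card {i\<in>{..<s} \<times> {..<d}. {Inr a, Inr ((a+1) mod d)} \<in> (case i of (h, p) \<Rightarrow> win d t Ch h p)}
          \<le> s * (t - 2)"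
proof -
  let ?g = "\<lambda>j. (a + d - j) mod d"
  have "{i\<in>{..<s} \<times> {..<d}. {Inr a, Inr ((a+1) mod d)} \<in> (case i of (h, p) \<Rightarrow> win d t Ch h p)}
        \<subseteq> {..<s} \<times> (?g ` {..t-3})"
    using mem_rim[OF t3 Ch td _ _ a] by fastforce
  then have "card {i\<in>{..<s} \<times> {..<d}. {Inr a, Inr ((a+1) mod d)} \<in> (case i of (h, p) \<Rightarrow> win d t Ch h p)}
        \<le> card ({..<s} \<times> (?g ` {..t-3}))"
    by (rule card_mono[rotated]) simp
  also have "\<dots> \<le> s * (t - 2)"
  proof -
    have "card (?g ` {..t-3}) \<le> t - 2"
      using card_image_le[of "{..t-3}" ?g] t3 by simp
    then show ?thesis by (simp add: card_cartesian_product)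
  qed
  finally show ?thesis .
qed

lemma pair_spoke:
  assumes t3: "3 \<le> t" and Ch: "Ch \<subseteq> fan_chords t" and td: "2 * t \<le> d" and y: "y < d"
    and e': "e' \<in> gwheel_edges d s" and ne: "e' \<noteq> {Inl h0, Inr y}"
  shows "card {i\<in>{..<s} \<times> {..<d}. {Inl h0, Inr y} \<in> (case i of (h, p) \<Rightarrow> win d t Ch h p)
             \<and> e' \<in> (case i of (h, p) \<Rightarrow> win d t Ch h p)}
          \<le> card (Jset t Ch) - 1"
proof -
  let ?g = "\<lambda>j. (y + d - j) mod d"
  have td': "t \<le> d" using td by linarith
  have g0: "?g 0 = y" using y by simp
  have gl: "?g (t-2) < d" using td t3 by (intro mod_less_divisor) linarith
  have key: "\<not> (e' \<in> win d t Ch h0 y \<and> e' \<in> win d t Ch h0 (?g (t-2)))"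
  proof
    assume both: "e' \<in> win d t Ch h0 y \<and> e' \<in> win d t Ch h0 (?g (t-2))"
    from E_cases[OF e'] show False
    proof
      assume "\<exists>h1<s. \<exists>y'<d. e' = {Inl h1, Inr y'}"
      then obtain h1 y' where e'eq: "e' = {Inl h1, Inr y'}" "y' < d" by blast
      from mem_spoke[OF t3 Ch td', of h1 y' h0 y] both e'eq y obtain j1 where
        j1: "j1 \<in> Jset t Ch" "y' = (y + j1) mod d" and "h0 = h1" by auto
      from mem_spoke[OF t3 Ch td', of h1 y' h0 "?g (t-2)"] both e'eq gl obtain j2 where
        j2: "j2 \<in> Jset t Ch" "y' = (?g (t-2) + j2) mod d" by auto
      have "j1 + (t - 2) = j2"
      proof (rule modL[of "t-2" d j1 j2 y])
        show "t - 2 \<le> d" "j1 + (t - 2) < d" "j2 < d"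
          using Jset_le[OF j1(1)] Jset_le[OF j2(1)] td t3 by linarith+
        show "(y + j1) mod d = ((y + d - (t - 2)) mod d + j2) mod d" using j1 j2 by simp
      qed
      then have "j1 = 0" using Jset_le[OF j2(1)] by linarith
      then have "y' = y" using j1 y by simp
      then show False using ne e'eq \<open>h0 = h1\<close> by simp
    next
      assume "\<exists>b<d. e' = {Inr b, Inr ((b+1) mod d)}"
      then obtain b where e'eq: "e' = {Inr b, Inr ((b+1) mod d)}" "b < d" by blast
      from mem_rim[OF t3 Ch td', of b h0 y] both e'eq y obtain j1 where
        j1: "j1 \<le> t - 3" "b = (y + j1) mod d" by auto
      from mem_rim[OF t3 Ch td', of b h0 "?g (t-2)"] both e'eq gl obtain j2 where
        j2: "j2 \<le> t - 3" "b = (?g (t-2) + j2) mod d" by auto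
      have "j1 + (t - 2) = j2"
      proof (rule modL[of "t-2" d j1 j2 y])
        show "t - 2 \<le> d" "j1 + (t - 2) < d" "j2 < d"
          using j1 j2 td t3 by linarith+
        show "(y + j1) mod d = ((y + d - (t - 2)) mod d + j2) mod d" using j1 j2 by simp
      qed
      then show False using j2 t3 by linarith
    qed
  qed
  obtain js where js: "js \<in> Jset t Ch" "\<not> e' \<in> win d t Ch h0 (?g js)"
  proof (cases "e' \<in> win d t Ch h0 y")
    case True
    then have "\<not> e' \<in> win d t Ch h0 (?g (t-2))" using key by blast
    moreover have "t - 2 \<in> Jset t Ch" by (simp add: Jset_def)
    ultimately show ?thesis using that by blast
  next
    case False
    moreover have "0 \<in> Jset t Ch" by (simp add: Jset_def)
    ultimately show ?thesis using that g0 by (metis)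
  qed
  have "{i\<in>{..<s} \<times> {..<d}. {Inl h0, Inr y} \<in> (case i of (h, p) \<Rightarrow> win d t Ch h p)
             \<and> e' \<in> (case i of (h, p) \<Rightarrow> win d t Ch h p)}
        \<subseteq> {h0} \<times> (?g ` (Jset t Ch - {js}))"
  proof (rule subsetI)
    fix i assume iin: "i \<in> {i\<in>{..<s} \<times> {..<d}. {Inl h0, Inr y} \<in> (case i of (h, p) \<Rightarrow> win d t Ch h p)
             \<and> e' \<in> (case i of (h, p) \<Rightarrow> win d t Ch h p)}"
    obtain h p where i: "i = (h, p)" by (cases i)
    have p: "p < d" and m1: "{Inl h0, Inr y} \<in> win d t Ch h p"
      and m2: "e' \<in> win d t Ch h p" using iin i by auto
    from mem_spoke[OF t3 Ch td' m1 p] obtain j where j: "h = h0" "j \<in> Jset t Ch" "p = ?g j" by blast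
    have "j \<noteq> js" using js m2 j by auto
    then show "i \<in> {h0} \<times> ?g ` (Jset t Ch - {js})" using j i by blast
  qed
  then have "card {i\<in>{..<s} \<times> {..<d}. {Inl h0, Inr y} \<in> (case i of (h, p) \<Rightarrow> win d t Ch h p)
             \<and> e' \<in> (case i of (h, p) \<Rightarrow> win d t Ch h p)}
        \<le> card ({h0} \<times> (?g ` (Jset t Ch - {js})))"
    by (rule card_mono[rotated]) (simp add: Jset_fin)
  also have "\<dots> \<le> card (Jset t Ch - {js})"
    by (simp add: card_cartesian_product card_image_le Jset_fin)
  also have "\<dots> = card (Jset t Ch) - 1" using js(1) Jset_fin by simp
  finally show ?thesis .
qed



lemma pair_rim:
  assumes t3: "5 \<le> t" and Ch: "Ch \<subseteq> fan_chords t" and td: "2 * t \<le> d" and a: "a < d" and b: "b < d"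
    and ne: "a \<noteq> b"
  shows "card {i\<in>{..<s} \<times> {..<d}. {Inr a, Inr ((a+1) mod d)} \<in> (case i of (h, p) \<Rightarrow> win d t Ch h p)
             \<and> {Inr b, Inr ((b+1) mod d)} \<in> (case i of (h, p) \<Rightarrow> win d t Ch h p)}
          \<le> s * (t - 3)"
proof -
  let ?g = "\<lambda>j. (a + d - j) mod d"
  let ?e' = "{Inr b, Inr ((b+1) mod d)} :: (nat + nat) set"
  have t3': "3 \<le> t" and td': "t \<le> d" using t3 td by linarith+
  have g0: "?g 0 = a" using a by simp
  have gl: "?g (t-3) < d" using td t3 by (intro mod_less_divisor) linarith
  have key: "\<not> ((\<exists>h. ?e' \<in> win d t Ch h a) \<and> (\<exists>h. ?e' \<in> win d t Ch h (?g (t-3))))"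
  proof
    assume "(\<exists>h. ?e' \<in> win d t Ch h a) \<and> (\<exists>h. ?e' \<in> win d t Ch h (?g (t-3)))"
    then obtain h1 h2 where both: "?e' \<in> win d t Ch h1 a" "?e' \<in> win d t Ch h2 (?g (t-3))" by blast
    from mem_rim[OF t3' Ch td' both(1) a b] obtain j1 where
      j1: "j1 \<le> t - 3" "b = (a + j1) mod d" by auto
    from mem_rim[OF t3' Ch td' both(2) gl b] obtain j2 where
      j2: "j2 \<le> t - 3" "b = (?g (t-3) + j2) mod d" by auto
    have "j1 + (t - 3) = j2"
    proof (rule modL[of "t-3" d j1 j2 a])
      show "t - 3 \<le> d" "j1 + (t - 3) < d" "j2 < d"
        using j1 j2 td t3 by linarith+
      show "(a + j1) mod d = ((a + d - (t - 3)) mod d + j2) mod d" using j1 j2 by simp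
    qed
    then have "j1 = 0" using j2 by linarith
    then show False using j1 a ne by simp
  qed
  obtain js where js: "js \<le> t - 3" "\<forall>h. \<not> ?e' \<in> win d t Ch h (?g js)"
  proof (cases "\<exists>h. ?e' \<in> win d t Ch h a")
    case True
    then have "\<forall>h. \<not> ?e' \<in> win d t Ch h (?g (t-3))" using key by blast
    then show ?thesis using that by blast
  next
    case False
    then show ?thesis using that[of 0] g0 by simp
  qed
  have "{i\<in>{..<s} \<times> {..<d}. {Inr a, Inr ((a+1) mod d)} \<in> (case i of (h, p) \<Rightarrow> win d t Ch h p)
             \<and> ?e' \<in> (case i of (h, p) \<Rightarrow> win d t Ch h p)}
        \<subseteq> {..<s} \<times> (?g ` ({..t-3} - {js}))"
  proof (rule subsetI)
    fix i assume iin: "i \<in> {i\<in>{..<s} \<times> {..<d}. {Inr a, Inr ((a+1) mod d)} \<in> (case i of (h, p) \<Rightarrow> win d t Ch h p)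
             \<and> ?e' \<in> (case i of (h, p) \<Rightarrow> win d t Ch h p)}"
    obtain h p where i: "i = (h, p)" by (cases i)
    have h: "h < s" and p: "p < d" and m1: "{Inr a, Inr ((a+1) mod d)} \<in> win d t Ch h p"
      and m2: "?e' \<in> win d t Ch h p" using iin i by auto
    from mem_rim[OF t3' Ch td' m1 p a] obtain j where j: "j \<le> t - 3" "p = ?g j" by blast
    have "j \<noteq> js" using js m2 j by auto
    then show "i \<in> {..<s} \<times> ?g ` ({..t-3} - {js})" using j i h by blast
  qed
  then have "card {i\<in>{..<s} \<times> {..<d}. {Inr a, Inr ((a+1) mod d)} \<in> (case i of (h, p) \<Rightarrow> win d t Ch h p)
             \<and> ?e' \<in> (case i of (h, p) \<Rightarrow> win d t Ch h p)}
        \<le> card ({..<s} \<times> (?g ` ({..t-3} - {js})))"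
    by (rule card_mono[rotated]) simp
  also have "\<dots> \<le> s * (t - 3)"
  proof -
    have "card (?g ` ({..t-3} - {js})) \<le> card ({..t-3} - {js})" by (rule card_image_le) simp
    also have "\<dots> = t - 3" using js(1) t3 by simp
    finally show ?thesis by (simp add: card_cartesian_product)
  qed
  finally show ?thesis .
qed

lemma main:
  fixes d s t \<sigma> :: nat and Ch :: "nat set set" and c :: "(nat + nat) set \<Rightarrow> 'c"
  assumes t5: "5 \<le> t" and td: "2 * t \<le> d" and s1: "1 \<le> s" and Ch: "Ch \<subseteq> fan_chords t"
    and sig: "card (Jset t Ch) \<le> \<sigma>" "\<sigma> \<le> s * (t - 3) + 1" "\<sigma> \<le> s * (t - 2)"
    and ineq: "\<forall>m\<ge>3. s * (t - 2) * m \<le> 2 * (s * (t - 3)) * (m - 1) + 1"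
    and norb: "\<not> has_rainbow_copy (gwheel_edges d s) c {0..<t} (cycle_edges t \<union> Ch)"
  shows "d \<le> (t - 3) * (card (gwheel_edges d s) - card (c ` gwheel_edges d s))"
proof -
  let ?I = "{..<s} \<times> {..<d}"
  let ?W = "\<lambda>i. case i of (h, p) \<Rightarrow> win d t Ch h p"
  let ?E = "gwheel_edges d s"
  have t3: "3 \<le> t" and td': "t \<le> d" and d0: "0 < d" using t5 td by linarith+
  have fE: "finite ?E"
  proof -
    have "?E = (\<lambda>(i, j). {Inl i, Inr j}) ` ({..<s} \<times> {..<d}) \<union> (\<lambda>j. {Inr j, Inr ((j + 1) mod d)}) ` {..<d}"
      unfolding gwheel_edges_def by auto
    then show ?thesis by simp
  qed
  have "card ?I \<le> (s * (t - 3)) * (card ?E - card (c ` ?E))"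
  proof (rule abstract_count[where mu = "s * (t - 2)"])
    show "finite ?I" by simp
    show "finite ?E" by (rule fE)
    show "\<forall>i\<in>?I. ?W i \<subseteq> ?E" using win_sub[OF t3 Ch _ d0] by auto
    show "\<forall>i\<in>?I. \<not> inj_on c (?W i)"
      using rainbow_of_win[OF t3 Ch _ d0, of _ s c] norb td' by auto
    show "\<forall>e\<in>?E. card {i\<in>?I. e \<in> ?W i} \<le> s * (t - 2)"
    proof
      fix e assume "e \<in> ?E"
      from E_cases[OF this] show "card {i\<in>?I. e \<in> ?W i} \<le> s * (t - 2)"
      proof
        assume "\<exists>h0<s. \<exists>y<d. e = {Inl h0, Inr y}"
        then obtain h0 y where "y < d" "e = {Inl h0, Inr y}" by blast
        then show ?thesis using count_spoke[OF t3 Ch td' \<open>y < d\<close>, of s h0] sig by simp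
      next
        assume "\<exists>a<d. e = {Inr a, Inr ((a+1) mod d)}"
        then obtain a where "a < d" "e = {Inr a, Inr ((a+1) mod d)}" by blast
        then show ?thesis using count_rim[OF t3 Ch td' \<open>a < d\<close>, of s] by simp
      qed
    qed
    show "\<forall>e\<in>?E. \<forall>e'\<in>?E. e \<noteq> e' \<longrightarrow> card {i\<in>?I. e \<in> ?W i \<and> e' \<in> ?W i} \<le> s * (t - 3)"
    proof (intro ballI impI)
      fix e e' assume e: "e \<in> ?E" and e': "e' \<in> ?E" and ne: "e \<noteq> e'"
      show "card {i\<in>?I. e \<in> ?W i \<and> e' \<in> ?W i} \<le> s * (t - 3)"
      proof (cases "\<exists>h0<s. \<exists>y<d. e = {Inl h0, Inr y}")
        case True
        then obtain h0 y where "y < d" "e = {Inl h0, Inr y}" by blast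
        then show ?thesis using pair_spoke[OF t3 Ch td \<open>y < d\<close> e', of h0] ne sig by simp
      next
        case F1: False
        show ?thesis
        proof (cases "\<exists>h0<s. \<exists>y<d. e' = {Inl h0, Inr y}")
          case True
          then obtain h0 y where "y < d" "e' = {Inl h0, Inr y}" by blast
          moreover have "{i\<in>?I. e \<in> ?W i \<and> e' \<in> ?W i} = {i\<in>?I. e' \<in> ?W i \<and> e \<in> ?W i}" by blast
          ultimately show ?thesis using pair_spoke[OF t3 Ch td \<open>y < d\<close> e, of h0] ne sig by simp
        next
          case False
          obtain a where a: "a < d" "e = {Inr a, Inr ((a+1) mod d)}" using E_cases[OF e] F1 by blast
          obtain b where b: "b < d" "e' = {Inr b, Inr ((b+1) mod d)}" using E_cases[OF e'] False by blast
          have "a \<noteq> b" using a b ne by auto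
          then show ?thesis using pair_rim[OF t5 Ch td a(1) b(1), of s] a b by simp
        qed
      qed
    qed
    show "\<forall>m\<ge>3. s * (t - 2) * m \<le> 2 * (s * (t - 3)) * (m - 1) + 1" by (rule ineq)
  qed
  then have "s * d \<le> s * ((t - 3) * (card ?E - card (c ` ?E)))" by (simp add: card_cartesian_product mult.assoc)
  then show ?thesis using s1 by simp
qed



lemma final_arith:
  fixes d t k N S :: nat
  assumes t5: "5 \<le> t" and h: "d \<le> (t - 3) * (N - k)" and NS: "N \<le> S * d" and kN: "k \<le> N"
  shows "real k \<le> (real S * (real t - 3) - 1) / (real t - 3) * real d"
proof -
  have "real d \<le> real (t - 3) * real (N - k)" using h by (metis of_nat_le_iff of_nat_mult)
  also have "real (t - 3) = real t - 3" using t5 by simp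
  also have "real (N - k) = real N - real k" using kN by simp
  finally have 1: "real d \<le> (real t - 3) * (real N - real k)" .
  have "real N \<le> real S * real d" using NS by (metis of_nat_le_iff of_nat_mult)
  then have "(real t - 3) * (real N - real k) \<le> (real t - 3) * (real S * real d - real k)"
    using t5 by (intro mult_left_mono) auto
  with 1 have 2: "real d \<le> (real t - 3) * (real S * real d - real k)" by linarith
  have tp: "real t - 3 > 0" using t5 by simp
  have "real k * (real t - 3) \<le> (real S * (real t - 3) - 1) * real d"
    using 2 by (simp add: algebra_simps)
  then show ?thesis using tp by (simp add: field_simps)
qed

lemma card_E: "card (gwheel_edges d s) \<le> (s + 1) * d"
proof -
  have "gwheel_edges d s = (\<lambda>(i, j). {Inl i, Inr j}) ` ({..<s} \<times> {..<d}) \<union> (\<lambda>j. {Inr j, Inr ((j + 1) mod d)}) ` {..<d}"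
    unfolding gwheel_edges_def by auto
  then have "card (gwheel_edges d s) = card ((\<lambda>(i, j). {Inl i, Inr j}) ` ({..<s} \<times> {..<d}) \<union> (\<lambda>j. {Inr j, Inr ((j + 1) mod d)}) ` {..<d})" by simp
  also have "\<dots> \<le> card ((\<lambda>(i, j). {Inl i, Inr j}) ` ({..<s} \<times> {..<d})) + card ((\<lambda>j. {Inr j, Inr ((j + 1) mod d)} :: (nat + nat) set) ` {..<d})"
    by (rule card_Un_le)
  also have "\<dots> \<le> card ({..<s} \<times> {..<d}) + card {..<d}"
    by (intro add_mono card_image_le) auto
  finally show ?thesis by (simp add: card_cartesian_product algebra_simps)
qed

lemma ineq1:
  assumes "6 \<le> t" shows "\<forall>m\<ge>3. s * (t - 2) * m \<le> 2 * (s * (t - 3)) * (m - 1) + (1::nat)"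
proof (intro allI impI)
  fix m :: nat assume m: "3 \<le> m"
  obtain u where u: "t = u + 6" using assms by (metis add.commute le_Suc_ex)
  obtain v where v: "m = v + 3" using m by (metis add.commute le_Suc_ex)
  have "(u + 4) * (v + 3) \<le> 2 * (u + 3) * (v + 2)"
  proof -
    have e1: "(u + 4) * (v + 3) = u*v + 3*u + 4*v + 12" by (simp add: algebra_simps)
    have e2: "2 * (u + 3) * (v + 2) = 2*(u*v) + 4*u + 6*v + 12" by (simp add: algebra_simps)
    show ?thesis unfolding e1 e2 by simp
  qed
  moreover have "t - 2 = u + 4" "t - 3 = u + 3" "m - 1 = v + 2" using u v by auto
  ultimately have "(t - 2) * m \<le> 2 * (t - 3) * (m - 1)" using v by simp
  then have "s * ((t - 2) * m) \<le> s * (2 * (t - 3) * (m - 1))" by (rule mult_le_mono2)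
  then show "s * (t - 2) * m \<le> 2 * (s * (t - 3)) * (m - 1) + 1" by (simp add: algebra_simps)
qed

lemma ineq2:
  assumes "5 \<le> t" shows "\<forall>m\<ge>3. 1 * (t - 2) * m \<le> 2 * (1 * (t - 3)) * (m - 1) + (1::nat)"
proof (intro allI impI)
  fix m :: nat assume m: "3 \<le> m"
  obtain u where u: "t = u + 5" using assms by (metis add.commute le_Suc_ex)
  obtain v where v: "m = v + 3" using m by (metis add.commute le_Suc_ex)
  have "(u + 3) * (v + 3) \<le> 2 * (u + 2) * (v + 2) + 1"
  proof -
    have e1: "(u + 3) * (v + 3) = u*v + 3*u + 3*v + 9" by (simp add: algebra_simps)
    have e2: "2 * (u + 2) * (v + 2) = 2*(u*v) + 4*u + 4*v + 8" by (simp add: algebra_simps)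
    show ?thesis unfolding e1 e2 by simp
  qed
  moreover have "t - 2 = u + 3" "t - 3 = u + 2" "m - 1 = v + 2" using u v by auto
  ultimately show "1 * (t - 2) * m \<le> 2 * (1 * (t - 3)) * (m - 1) + 1" using v by simp
qed

lemma rainbow_mono:
  assumes "has_rainbow_copy E c V H'" "H \<subseteq> H'"
  shows "has_rainbow_copy E c V H"
  using assms unfolding has_rainbow_copy_def by (meson inj_on_subset subsetD)

lemma card_fan_chords:
  assumes "3 \<le> t" shows "card (fan_chords t) = t - 3"
proof -
  have "fan_chords t = (\<lambda>i. {0, i}) ` {2..t-2}" unfolding fan_chords_def by auto
  moreover have "inj_on (\<lambda>i. {0::nat, i}) {2..t-2}"
    by (auto simp: inj_on_def doubleton_eq_iff)
  ultimately show ?thesis using assms by (simp add: card_image)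
qed



lemma floor_contra:
  fixes X :: real and k :: nat
  assumes "int k \<ge> \<lfloor>X\<rfloor> + 1" "real k \<le> X"
  shows False
proof -
  have "real_of_int (int k) \<ge> real_of_int (\<lfloor>X\<rfloor> + 1)" using assms(1) by (simp only: of_int_le_iff)
  then have "real k \<ge> real_of_int \<lfloor>X\<rfloor> + 1" by simp
  moreover have "X < real_of_int \<lfloor>X\<rfloor> + 1" using floor_correct[of X] by simp
  ultimately show False using assms(2) by linarith
qed

lemma finE: "finite (gwheel_edges d s)"
proof -
  have "gwheel_edges d s = (\<lambda>(i, j). {Inl i, Inr j}) ` ({..<s} \<times> {..<d}) \<union> (\<lambda>j. {Inr j, Inr ((j + 1) mod d)}) ` {..<d}"
    unfolding gwheel_edges_def by auto
  then show ?thesis by simp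
qed

theorem theorem3p2:
  fixes d s t l :: nat
  assumes "s \<ge> 1" and "d \<ge> 3 * t - 5" and "t \<ge> max 5 (l + 4)"
  shows
    "((s = 2 \<and> t \<ge> 6) \<or> (s \<ge> 3 \<and> t \<ge> 7) \<longrightarrow>
       (\<forall>c :: (nat + nat) set \<Rightarrow> nat.
          int (card (c ` gwheel_edges d s)) \<ge>
            \<lfloor>(real ((s + 1) * t) - real (3 * s + 4)) / (real t - 3) * real d\<rfloor> + 1
          \<longrightarrow> has_rainbow_copy (gwheel_edges d s) c {0..<t} (fan_edges t)))
     \<and>
     (\<forall>\<theta> \<in> Theta_class t l. \<forall>c :: (nat + nat) set \<Rightarrow> nat.
          int (card (c ` gwheel_edges d 1)) \<ge>
            \<lfloor>(2 * real t - 7) / (real t - 3) * real d\<rfloor> + 1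
          \<longrightarrow> has_rainbow_copy (gwheel_edges d 1) c {0..<t} \<theta>)"
proof (intro conjI impI allI ballI)
  have t5: "5 \<le> t" and tl: "l + 4 \<le> t" using assms(3) by auto
  have td: "2 * t \<le> d" using assms(2) t5 by linarith
  have t3: "3 \<le> t" using t5 by simp
  have JT: "Jset t Ch \<subseteq> {..t-2}" for Ch by (auto simp: Jset_def)
  {
    fix c :: "(nat + nat) set \<Rightarrow> nat"
    assume cond: "(s = 2 \<and> t \<ge> 6) \<or> (s \<ge> 3 \<and> t \<ge> 7)"
      and kb: "int (card (c ` gwheel_edges d s)) \<ge>
            \<lfloor>(real ((s + 1) * t) - real (3 * s + 4)) / (real t - 3) * real d\<rfloor> + 1"
    have s2: "2 \<le> s" and t6: "6 \<le> t" using cond by auto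
    show "has_rainbow_copy (gwheel_edges d s) c {0..<t} (fan_edges t)"
    proof (rule ccontr)
      assume nr: "\<not> has_rainbow_copy (gwheel_edges d s) c {0..<t} (fan_edges t)"
      have "card (Jset t (fan_chords t)) \<le> card {..t-2}" by (rule card_mono[OF _ JT]) simp
      then have cJ: "card (Jset t (fan_chords t)) \<le> t - 1" using t5 by simp
      have "2 * (t - 3) \<le> s * (t - 3)" using s2 by (rule mult_le_mono1)
      then have sg1: "t - 1 \<le> s * (t - 3) + 1" using t5 by linarith
      have "2 * (t - 2) \<le> s * (t - 2)" using s2 by (rule mult_le_mono1)
      then have sg2: "t - 1 \<le> s * (t - 2)" using t5 by linarith
      have "d \<le> (t - 3) * (card (gwheel_edges d s) - card (c ` gwheel_edges d s))"
        by (rule main[OF t5 td assms(1) order_refl cJ sg1 sg2 ineq1[OF t6]])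
           (use nr in \<open>simp add: fan_edges_def\<close>)
      from final_arith[OF t5 this card_E card_image_le[OF finE]]
      have b: "real (card (c ` gwheel_edges d s)) \<le> (real (s + 1) * (real t - 3) - 1) / (real t - 3) * real d" .
      have eq: "real (s + 1) * (real t - 3) - 1 = real ((s + 1) * t) - real (3 * s + 4)"
        by (simp add: algebra_simps)
      from b have "real (card (c ` gwheel_edges d s)) \<le> (real ((s + 1) * t) - real (3 * s + 4)) / (real t - 3) * real d"
        unfolding eq .
      then show False using floor_contra[OF kb] by blast
    qed
  }
  {
    fix \<theta> and c :: "(nat + nat) set \<Rightarrow> nat"
    assume th: "\<theta> \<in> Theta_class t l"
      and kb: "int (card (c ` gwheel_edges d 1)) \<ge> \<lfloor>(2 * real t - 7) / (real t - 3) * real d\<rfloor> + 1"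
    obtain C where C: "\<theta> = cycle_edges t \<union> C" "C \<subseteq> fan_chords t" "card C = l"
      using th unfolding Theta_class_def by blast
    have "card C < card (fan_chords t)" using C(3) card_fan_chords[OF t3] tl by simp
    then have "\<not> fan_chords t \<subseteq> C"
      using card_mono[of C "fan_chords t"] C(2) card_fan_chords[OF t3] t5
      by (metis card.infinite leD less_nat_zero_code subset_antisym)
    then obtain ch where ch: "ch \<in> fan_chords t" "ch \<notin> C" by blast
    then obtain i0 where i0: "ch = {0, i0}" "2 \<le> i0" "i0 \<le> t - 2" unfolding fan_chords_def by blast
    define Ch where "Ch = fan_chords t - {ch}"
    have Chs: "Ch \<subseteq> fan_chords t" by (auto simp: Ch_def)
    have "Jset t Ch \<subseteq> {..t-2} - {i0 - 1}"
    proof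
      fix j assume j: "j \<in> Jset t Ch"
      have "j \<noteq> i0 - 1"
      proof
        assume "j = i0 - 1"
        then have "j + 1 = i0" using i0 by simp
        moreover have "j \<noteq> 0" "j \<noteq> t - 2" using \<open>j = i0 - 1\<close> i0 t5 by auto
        ultimately have "{0, i0} \<in> Ch" using j by (auto simp: Jset_def)
        then show False using i0 by (simp add: Ch_def)
      qed
      then show "j \<in> {..t-2} - {i0 - 1}" using JT j by auto
    qed
    then have "card (Jset t Ch) \<le> card ({..t-2} - {i0 - 1})" by (rule card_mono[rotated]) simp
    also have "\<dots> = t - 2" using i0 t5 by simp
    finally have cJ: "card (Jset t Ch) \<le> t - 2" .
    show "has_rainbow_copy (gwheel_edges d 1) c {0..<t} \<theta>"
    proof (rule ccontr)
      assume nr: "\<not> has_rainbow_copy (gwheel_edges d 1) c {0..<t} \<theta>"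
      have sub: "\<theta> \<subseteq> cycle_edges t \<union> Ch" using C ch by (auto simp: Ch_def)
      have nr2: "\<not> has_rainbow_copy (gwheel_edges d 1) c {0..<t} (cycle_edges t \<union> Ch)"
        using rainbow_mono[OF _ sub] nr by blast
      have "d \<le> (t - 3) * (card (gwheel_edges d 1) - card (c ` gwheel_edges d 1))"
        by (rule main[OF t5 td order_refl Chs cJ _ _ ineq2[OF t5] nr2]) (use t5 in simp_all)
      from final_arith[OF t5 this card_E card_image_le[OF finE]]
      have b: "real (card (c ` gwheel_edges d 1)) \<le> (real (1 + 1) * (real t - 3) - 1) / (real t - 3) * real d" .
      have eq: "real (1 + 1) * (real t - 3) - 1 = 2 * real t - 7"
        by (simp add: algebra_simps)
      from b have "real (card (c ` gwheel_edges d 1)) \<le> (2 * real t - 7) / (real t - 3) * real d"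
        unfolding eq .
      then show False using floor_contra[OF kb] by blast
    qed
  }
qed

end
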